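(* Let $\alpha_1,\dots,\alpha_n\in\mathbb R$, $f(t)=\prod_{j=1}^n(t-\alpha_j)$, $N\ge1$, and for $i=1,\dots,N$ let $A_i\neq0$ and $b_i,c_i\in\mathbb R\setminus\{\alpha_1,\dots,\alpha_n\}$ with $f(b_i)=f(c_i)$, such that all $b_i,c_j$ ($i\neq j$) satisfy $b_i\neq c_j$, $b_i\neq b_j$, $c_i\neq c_j$. Put $B_{i,j}=\frac{b_i-\alpha_j}{c_i-\alpha_j}$, $Z_{i,j}=\frac{(b_i-b_j)(c_i-c_j)}{(b_i-c_j)(c_i-b_j)}$ for $i\neq j$, $f_i(\mathbf s)=A_i\prod_{j=1}^nB_{i,j}^{\mathbf s_j}$ for $\mathbf s\in\mathbb Z^n$, and $$\tau(\mathbf s)=\sum_{T\subseteq[N]}\ \prod_{\{i<j\}\subseteq T}Z_{i,j}\ \prod_{i\in T}f_i(\mathbf s).$$ Fix $k\in[N]$. Let $\tau^{(b_k\leftrightarrow c_k)}$ denote the function obtained by the same formula after interchanging the values of $b_k$ and $c_k$, and let $\tau^{\mathrm{adj}}$ denote the function obtained by the same formula after replacing $A_j$ by $A_j/Z_{k,j}$ for every $j\neq k$ and $A_k$ by $1/A_k$ (keeping all $b_i,c_i$). Then for all $\mathbf s\in\mathbb Z^n$, $$\tau^{(b_k\leftrightarrow c_k)}(\mathbf s)=\frac{A_k}{\prod_{j=1}^nB_{k,j}^{\mathbf s_j}}\ \tau^{\mathrm{adj}}(\mathbf s).$$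
   Context: $[N]=\{1,\dots,N\}$. Note $Z_{i,j}=Z_{j,i}$. *)

theory Defs
  imports Complex_Main
begin

text \<open>Indices: alpha on {1..n}; A, b, c on {1..N}; s :: nat => int on {1..n}.\<close>

definition polyf :: "nat \<Rightarrow> (nat \<Rightarrow> real) \<Rightarrow> real \<Rightarrow> real" where
  "polyf n alpha t = (\<Prod>j=1..n. t - alpha j)"

definition Bcoef :: "(nat \<Rightarrow> real) \<Rightarrow> (nat \<Rightarrow> real) \<Rightarrow> (nat \<Rightarrow> real) \<Rightarrow> nat \<Rightarrow> nat \<Rightarrow> real" where
  "Bcoef alpha b c i j = (b i - alpha j) / (c i - alpha j)"

definition Zcoef :: "(nat \<Rightarrow> real) \<Rightarrow> (nat \<Rightarrow> real) \<Rightarrow> nat \<Rightarrow> nat \<Rightarrow> real" where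
  "Zcoef b c i j = ((b i - b j) * (c i - c j)) / ((b i - c j) * (c i - b j))"

definition fcoef :: "nat \<Rightarrow> (nat \<Rightarrow> real) \<Rightarrow> (nat \<Rightarrow> real) \<Rightarrow> (nat \<Rightarrow> real) \<Rightarrow> (nat \<Rightarrow> real)
    \<Rightarrow> nat \<Rightarrow> (nat \<Rightarrow> int) \<Rightarrow> real" where
  "fcoef n alpha A b c i s = A i * (\<Prod>j=1..n. Bcoef alpha b c i j powi s j)"

definition tau :: "nat \<Rightarrow> nat \<Rightarrow> (nat \<Rightarrow> real) \<Rightarrow> (nat \<Rightarrow> real) \<Rightarrow> (nat \<Rightarrow> real) \<Rightarrow> (nat \<Rightarrow> real)
    \<Rightarrow> (nat \<Rightarrow> int) \<Rightarrow> real" where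
  "tau n N alpha A b c s =
     (\<Sum>T\<in>Pow {1..N}.
        (\<Prod>p\<in>{(i, j). i \<in> T \<and> j \<in> T \<and> i < j}. Zcoef b c (fst p) (snd p))
        * (\<Prod>i\<in>T. fcoef n alpha A b c i s))"

end

theory Submission imports Defs begin

lemma sum_Pow_insert:
  assumes "finite J" "k \<notin> J"
  shows "(\<Sum>T\<in>Pow (insert k J). F T) = (\<Sum>T\<in>Pow J. F T) + (\<Sum>T\<in>Pow J. F (insert k T))"
proof -
  have inj: "inj_on (insert k) (Pow J)"
    using assms(2) unfolding inj_on_def by (metis Pow_iff insert_ident subsetD)
  have d: "Pow J \<inter> insert k ` Pow J = {}" using assms(2) by auto
  have "(\<Sum>T\<in>Pow (insert k J). F T) = (\<Sum>T\<in>Pow J. F T) + (\<Sum>T\<in>insert k ` Pow J. F T)"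
    unfolding Pow_insert using assms(1) d by (intro sum.union_disjoint) auto
  also have "(\<Sum>T\<in>insert k ` Pow J. F T) = (\<Sum>T\<in>Pow J. F (insert k T))"
    using sum.reindex[OF inj] by simp
  finally show ?thesis .
qed

lemma pairprod_insert:
  fixes g :: "nat \<Rightarrow> nat \<Rightarrow> real"
  assumes "finite S" "k \<notin> S"
  shows "(\<Prod>p\<in>{(i, j). i \<in> insert k S \<and> j \<in> insert k S \<and> i < j}. g (fst p) (snd p))
       = (\<Prod>p\<in>{(i, j). i \<in> S \<and> j \<in> S \<and> i < j}. g (fst p) (snd p))
         * (\<Prod>j\<in>S. if k < j then g k j else g j k)"
proof -
  define h where "h = (\<lambda>j. if k < j then (k, j) else (j, k))"
  have eq: "{(i, j). i \<in> insert k S \<and> j \<in> insert k S \<and> i < j}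
      = {(i, j). i \<in> S \<and> j \<in> S \<and> i < j} \<union> h ` S"
    using assms(2) unfolding h_def by (auto split: if_splits) (metis linorder_neqE_nat)+
  have fin: "finite {(i, j). i \<in> S \<and> j \<in> S \<and> i < j}"
    by (rule finite_subset[of _ "S \<times> S"]) (use assms(1) in auto)
  have d: "{(i, j). i \<in> S \<and> j \<in> S \<and> i < j} \<inter> h ` S = {}"
    using assms(2) unfolding h_def by auto
  have inj: "inj_on h S" using assms(2) unfolding h_def inj_on_def by (auto split: if_splits)
  have "(\<Prod>p\<in>h ` S. g (fst p) (snd p)) = (\<Prod>j\<in>S. g (fst (h j)) (snd (h j)))"
    using prod.reindex[OF inj] by simp
  also have "\<dots> = (\<Prod>j\<in>S. if k < j then g k j else g j k)"
    unfolding h_def by (intro prod.cong) auto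
  finally have r: "(\<Prod>p\<in>h ` S. g (fst p) (snd p)) = (\<Prod>j\<in>S. if k < j then g k j else g j k)" .
  show ?thesis unfolding eq
    by (subst prod.union_disjoint) (use fin assms(1) d r in auto)
qed

theorem proposition8p8:
  fixes n N k :: nat and alpha A b c :: "nat \<Rightarrow> real" and s :: "nat \<Rightarrow> int"
  assumes "N \<ge> 1"
    and "\<And>i. i \<in> {1..N} \<Longrightarrow> A i \<noteq> 0"
    and "\<And>i. i \<in> {1..N} \<Longrightarrow> b i \<notin> alpha ` {1..n}"
    and "\<And>i. i \<in> {1..N} \<Longrightarrow> c i \<notin> alpha ` {1..n}"
    and "\<And>i. i \<in> {1..N} \<Longrightarrow> polyf n alpha (b i) = polyf n alpha (c i)"
    and "\<And>i j. i \<in> {1..N} \<Longrightarrow> j \<in> {1..N} \<Longrightarrow> i \<noteq> j \<Longrightarrow>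
            b i \<noteq> c j \<and> b i \<noteq> b j \<and> c i \<noteq> c j"
    and "k \<in> {1..N}"
  shows "tau n N alpha A (b(k := c k)) (c(k := b k)) s =
         A k / (\<Prod>j=1..n. Bcoef alpha b c k j powi s j)
         * tau n N alpha (\<lambda>j. if j = k then 1 / A k else A j / Zcoef b c k j) b c s"
proof -
  define b' where "b' = b(k := c k)"
  define c' where "c' = c(k := b k)"
  define A' where "A' = (\<lambda>j. if j = k then 1 / A k else A j / Zcoef b c k j)"
  define J where "J = {1..N} - {k}"
  define P where "P = (\<Prod>j=1..n. Bcoef alpha b c k j powi s j)"
  define Zb where "Zb = Zcoef b c"
  define Zs where "Zs = Zcoef b' c'"
  define f where "f = (\<lambda>i. fcoef n alpha A b c i s)"
  define Q where "Q = (\<lambda>T. \<Prod>p\<in>{(i, j). i \<in> T \<and> j \<in> T \<and> i < j}. Zb (fst p) (snd p))"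
  have IJ: "{1..N} = insert k J" using assms(7) unfolding J_def by auto
  have kJ: "k \<notin> J" and fJ: "finite J" unfolding J_def by auto
  have Ak: "A k \<noteq> 0" using assms(2,7) by auto
  have Bnz: "Bcoef alpha b c k j \<noteq> 0" if "j \<in> {1..n}" for j
    using assms(3,4)[OF assms(7)] that unfolding Bcoef_def by force
  have Pnz: "P \<noteq> 0" unfolding P_def using Bnz by (auto intro: power_int_not_zero)
  have fk': "fcoef n alpha A b' c' k s = A k / P"
  proof -
    have "(\<Prod>j=1..n. Bcoef alpha b' c' k j powi s j) = (\<Prod>j=1..n. inverse (Bcoef alpha b c k j powi s j))"
      by (intro prod.cong refl) (simp add: b'_def c'_def Bcoef_def power_int_inverse[symmetric])
    also have "\<dots> = inverse P" unfolding P_def using prod_inversef[of "\<lambda>j. Bcoef alpha b c k j powi s j" "{1..n}"] by (simp add: comp_def)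
    finally show ?thesis unfolding fcoef_def by (simp add: divide_inverse)
  qed
  have fi': "fcoef n alpha A b' c' i s = f i" if "i \<in> J" for i
    using that kJ unfolding f_def fcoef_def Bcoef_def b'_def c'_def by (auto intro!: prod.cong)
  have fadj: "fcoef n alpha A' b c i s = f i / Zb k i" if "i \<in> J" for i
    using that kJ unfolding f_def fcoef_def A'_def Zb_def by auto
  have fadjk: "fcoef n alpha A' b c k s = P / A k"
    unfolding fcoef_def A'_def P_def by simp
  have Znz: "Zb k j \<noteq> 0" if "j \<in> J" for j
    using that assms(6)[of k j] assms(6)[of j k] assms(7) unfolding J_def Zb_def Zcoef_def by auto
  have Zs_eq: "Zs i j = Zb i j" if "i \<in> J" "j \<in> J" for i j
    using that kJ unfolding Zs_def Zb_def Zcoef_def b'_def c'_def by auto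
  have ZZs: "(if k < j then Zs k j else Zs j k) = inverse (Zb k j)" if "j \<in> J" for j
    using that kJ unfolding Zs_def Zb_def Zcoef_def b'_def c'_def by (auto simp: field_simps)
  have ZZb: "(if k < j then Zb k j else Zb j k) = Zb k j" if "j \<in> J" for j
  proof -
    have "Zb j k = Zb k j" unfolding Zb_def Zcoef_def
      by (simp add: field_simps)
    then show ?thesis by simp
  qed
  have QS: "(\<Prod>p\<in>{(i, j). i \<in> T \<and> j \<in> T \<and> i < j}. Zs (fst p) (snd p)) = Q T"
    if "T \<subseteq> J" for T
    unfolding Q_def using that by (intro prod.cong refl) (auto intro!: Zs_eq)
  have fT: "finite T" if "T \<in> Pow J" for T using that fJ finite_subset by auto
  have kT: "k \<notin> T" if "T \<in> Pow J" for T using that kJ by auto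
  define F where "F = (\<lambda>T. \<Prod>i\<in>T. f i)"
  define I where "I = (\<lambda>T. \<Prod>i\<in>T. inverse (Zb k i))"
  have L: "tau n N alpha A b' c' s =
     (\<Sum>T\<in>Pow J. Q T * F T) + (\<Sum>T\<in>Pow J. Q T * I T * (A k / P * F T))"
    unfolding tau_def IJ Zs_def[symmetric]
    apply (subst sum_Pow_insert[OF fJ kJ])
    apply (intro arg_cong2[where f="(+)"] sum.cong refl)
    subgoal for T
      using QS[of T] fi' unfolding F_def by (auto intro!: prod.cong)
    subgoal for T
      apply (subst pairprod_insert[OF fT kT], assumption+)
      apply (subst prod.insert[OF fT kT], assumption+)
      using QS[of T] fi' ZZs unfolding F_def I_def fk'[symmetric]
      by (auto intro!: prod.cong arg_cong2[where f="(*)"])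
    done
  have R: "tau n N alpha A' b c s =
     (\<Sum>T\<in>Pow J. Q T * (F T * I T)) + (\<Sum>T\<in>Pow J. Q T * (\<Prod>i\<in>T. Zb k i) * (P / A k * (F T * I T)))"
    unfolding tau_def IJ Zb_def[symmetric]
    apply (subst sum_Pow_insert[OF fJ kJ])
    apply (intro arg_cong2[where f="(+)"] sum.cong refl)
    subgoal for T
      using fadj unfolding F_def I_def Q_def
      by (auto simp: prod.distrib[symmetric] divide_inverse intro!: prod.cong arg_cong2[where f="(*)"])
    subgoal for T
      apply (subst pairprod_insert[OF fT kT], assumption+)
      apply (subst prod.insert[OF fT kT], assumption+)
      using fadj ZZb fadjk unfolding F_def I_def Q_def
      by (auto simp: prod.distrib[symmetric] divide_inverse intro!: prod.cong arg_cong2[where f="(*)"])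
    done
  have ZI: "(\<Prod>i\<in>T. Zb k i) * I T = 1" if "T \<in> Pow J" for T
    unfolding I_def prod.distrib[symmetric] using that Znz by (intro prod.neutral) auto
  have "A k / P * tau n N alpha A' b c s =
     (\<Sum>T\<in>Pow J. Q T * I T * (A k / P * F T)) + (\<Sum>T\<in>Pow J. Q T * F T * ((\<Prod>i\<in>T. Zb k i) * I T) * (A k / P * (P / A k)))"
    unfolding R distrib_left sum_distrib_left
    by (intro arg_cong2[where f="(+)"] sum.cong refl) (simp_all add: algebra_simps)
  also have "\<dots> = (\<Sum>T\<in>Pow J. Q T * I T * (A k / P * F T)) + (\<Sum>T\<in>Pow J. Q T * F T)"
    using ZI Ak Pnz by (intro arg_cong2[where f="(+)"] sum.cong refl) auto
  finally show ?thesis using L unfolding b'_def c'_def A'_def P_def by simp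
qed

end
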